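(* Let $G=(V,E)$ be a classical graph with vertex set $V=[n]$ and let $f\colon V \to \mathbb{C}^d$ be an orthogonal representation of $G$. Then the completely positive map $\phi\colon M_n \to M_d$ defined by $\phi(X) = \sum_{i=1}^n |f(i)\rangle\langle e_i| X |e_i\rangle\langle f(i)|$ for all $X\in M_n$ is an orthogonal representation of the quantum graph $\mathcal{S}_G=\operatorname{span}\{|e_i\rangle\langle e_j| : i=j\text{ or } i \text{ adjacent to } j\}$.
   Context: $(|e_k\rangle)$ is the standard basis of $\mathbb{C}^n$. A classical orthogonal representation of $G$ is a map $f\colon V\to\mathbb{C}^d$ such that $f(i)\perp f(j)$ whenever $i\neq j$ and $i,j$ are not adjacent. Elements $a,b$ of a $C^*$-algebra are orthogonal, $a\perp b$, if $ab=ba=a^*b=ab^*=0$. For a quantum graph $\mathcal{S}\subseteq M_n$ (a subspace closed under adjoints containing $I_n$), a completely positive map $\phi\colon M_n\to M_d$ is an orthogonal representation of $\mathcal{S}$ if $\phi(A)\perp\phi(B)$ for all $A,B\in M_n$ with $A\mathcal{S}B=B\mathcal{S}A=A^*\mathcal{S}B=A\mathcal{S}B^*=\{0\}$. *)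

theory Defs
  imports "Jordan_Normal_Form.Matrix"
begin

definition cadj :: "complex mat \<Rightarrow> complex mat" where
  "cadj A = mat (dim_col A) (dim_row A) (\<lambda>(i, j). cnj (A $$ (j, i)))"

definition cinner :: "complex vec \<Rightarrow> complex vec \<Rightarrow> complex" where
  "cinner u v = (\<Sum>i<dim_vec v. cnj (u $ i) * v $ i)"

definition ket :: "complex vec \<Rightarrow> complex mat" where
  "ket v = mat (dim_vec v) 1 (\<lambda>(i, j). v $ i)"

definition bra :: "complex vec \<Rightarrow> complex mat" where
  "bra v = cadj (ket v)"

definition msum :: "nat \<Rightarrow> (nat \<Rightarrow> complex mat) \<Rightarrow> nat \<Rightarrow> complex mat" where
  "msum d g n = foldr (+) (map g [0..<n]) (0\<^sub>m d d)"

definition simple_graph :: "nat \<Rightarrow> (nat \<Rightarrow> nat \<Rightarrow> bool) \<Rightarrow> bool" where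
  "simple_graph n E \<longleftrightarrow> (\<forall>i<n. \<forall>j<n. E i j \<longrightarrow> E j i) \<and> (\<forall>i<n. \<not> E i i)"

definition classical_orth_rep :: "nat \<Rightarrow> (nat \<Rightarrow> nat \<Rightarrow> bool) \<Rightarrow> nat \<Rightarrow> (nat \<Rightarrow> complex vec) \<Rightarrow> bool" where
  "classical_orth_rep n E d f \<longleftrightarrow>
     (\<forall>i<n. f i \<in> carrier_vec d) \<and>
     (\<forall>i<n. \<forall>j<n. i \<noteq> j \<and> \<not> E i j \<longrightarrow> cinner (f i) (f j) = 0)"

definition eunit :: "nat \<Rightarrow> nat \<Rightarrow> nat \<Rightarrow> complex mat" where
  "eunit n i j = ket (unit_vec n i) * bra (unit_vec n j)"

definition graph_qgraph :: "nat \<Rightarrow> (nat \<Rightarrow> nat \<Rightarrow> bool) \<Rightarrow> complex mat set" where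
  "graph_qgraph n E = {S. \<exists>c :: nat \<Rightarrow> nat \<Rightarrow> complex.
      S = msum n (\<lambda>i. msum n (\<lambda>j. (if i = j \<or> E i j then c i j else 0) \<cdot>\<^sub>m eunit n i j) n) n}"

definition orth :: "complex mat \<Rightarrow> complex mat \<Rightarrow> bool" where
  "orth a b \<longleftrightarrow> a * b = 0\<^sub>m (dim_row a) (dim_col b) \<and> b * a = 0\<^sub>m (dim_row b) (dim_col a)
     \<and> cadj a * b = 0\<^sub>m (dim_col a) (dim_col b) \<and> a * cadj b = 0\<^sub>m (dim_row a) (dim_row b)"

definition psd :: "nat \<Rightarrow> complex mat \<Rightarrow> bool" where
  "psd m M \<longleftrightarrow> M \<in> carrier_mat m m \<and>
     (\<forall>v \<in> carrier_vec m. \<exists>r :: real. r \<ge> 0 \<and> cinner v (M *\<^sub>v v) = complex_of_real r)"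

text \<open>the (a,b) block of a block matrix in M_k(M_n), viewed as a kn x kn matrix\<close>
definition block :: "nat \<Rightarrow> complex mat \<Rightarrow> nat \<Rightarrow> nat \<Rightarrow> complex mat" where
  "block n X a b = mat n n (\<lambda>(i, j). X $$ (a * n + i, b * n + j))"

text \<open>phi : M_n -> M_d linear and completely positive: id_k (x) phi maps positive
  elements of M_k(M_n) to positive elements of M_k(M_d), for every k\<close>
definition completely_positive :: "nat \<Rightarrow> nat \<Rightarrow> (complex mat \<Rightarrow> complex mat) \<Rightarrow> bool" where
  "completely_positive n d \<phi> \<longleftrightarrow>
     (\<forall>A \<in> carrier_mat n n. \<phi> A \<in> carrier_mat d d) \<and>
     (\<forall>A \<in> carrier_mat n n. \<forall>B \<in> carrier_mat n n. \<phi> (A + B) = \<phi> A + \<phi> B) \<and>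
     (\<forall>A \<in> carrier_mat n n. \<forall>c. \<phi> (c \<cdot>\<^sub>m A) = c \<cdot>\<^sub>m \<phi> A) \<and>
     (\<forall>k. \<forall>X. psd (k * n) X \<longrightarrow>
        psd (k * d) (mat (k * d) (k * d) (\<lambda>(r, s). \<phi> (block n X (r div d) (s div d)) $$ (r mod d, s mod d))))"

definition qgraph_orth_rep :: "nat \<Rightarrow> complex mat set \<Rightarrow> nat \<Rightarrow> (complex mat \<Rightarrow> complex mat) \<Rightarrow> bool" where
  "qgraph_orth_rep n S d \<phi> \<longleftrightarrow> completely_positive n d \<phi> \<and>
     (\<forall>A \<in> carrier_mat n n. \<forall>B \<in> carrier_mat n n.
        (\<forall>T \<in> S. A * T * B = 0\<^sub>m n n \<and> B * T * A = 0\<^sub>m n n \<and>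
                   cadj A * T * B = 0\<^sub>m n n \<and> A * T * cadj B = 0\<^sub>m n n)
        \<longrightarrow> orth (\<phi> A) (\<phi> B))"

end

theory Submission
  imports Defs
begin

lemma foldr_msum:
  "(\<forall>x\<in>set xs. g x \<in> carrier_mat d d) \<Longrightarrow>
   foldr (+) (map g xs) (0\<^sub>m d d) = mat d d (\<lambda>(r,s). sum_list (map (\<lambda>i. g i $$ (r,s)) xs))"
  by (induction xs) (auto intro!: eq_matI)

lemma msum_eq:
  assumes "\<And>i. i < n \<Longrightarrow> g i \<in> carrier_mat d d"
  shows "msum d g n = mat d d (\<lambda>(r,s). \<Sum>i<n. g i $$ (r,s))"
  unfolding msum_def using assms
  by (subst foldr_msum) (auto simp: sum_set_upt_conv_sum_list_nat[symmetric] atLeast0LessThan)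

lemma uv_idx[simp]: "j < n \<Longrightarrow> unit_vec n i $ j = (if j = i then 1 else 0)"
  by (simp add: unit_vec_def)

lemma eunit_eq: "eunit n i j = mat n n (\<lambda>(r,s). if r = i \<and> s = j then 1 else 0)"
proof (rule eq_matI)
  show "dim_row (eunit n i j) = dim_row (mat n n (\<lambda>(r,s). if r = i \<and> s = j then 1 else (0::complex)))"
    by (simp add: eunit_def ket_def bra_def cadj_def)
  show "dim_col (eunit n i j) = dim_col (mat n n (\<lambda>(r,s). if r = i \<and> s = j then 1 else (0::complex)))"
    by (simp add: eunit_def ket_def bra_def cadj_def)
  fix r s assume "r < dim_row (mat n n (\<lambda>(r,s). if r = i \<and> s = j then 1 else (0::complex)))"
    "s < dim_col (mat n n (\<lambda>(r,s). if r = i \<and> s = j then 1 else (0::complex)))"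
  then show "eunit n i j $$ (r, s) = mat n n (\<lambda>(r,s). if r = i \<and> s = j then 1 else 0) $$ (r, s)"
    by (simp add: eunit_def ket_def bra_def cadj_def scalar_prod_def)
qed

lemma eunit_carrier: "eunit n i j \<in> carrier_mat n n"
  by (simp add: eunit_eq)

lemma eunit_index: "r < n \<Longrightarrow> s < n \<Longrightarrow> eunit n i j $$ (r,s) = (if r = i \<and> s = j then 1 else 0)"
  by (simp add: eunit_eq)


lemma ket_unit: "ket (unit_vec n i) = mat n 1 (\<lambda>(r,s). if r = i then 1 else 0)"
  by (rule eq_matI) (auto simp: ket_def)

lemma bra_unit: "bra (unit_vec n i) = mat 1 n (\<lambda>(r,s). if s = i then 1 else 0)"
  by (rule eq_matI) (auto simp: bra_def ket_def cadj_def)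

lemma sum_delta_l: "i < (n::nat) \<Longrightarrow> (\<Sum>k<n. (if k = i then 1 else 0) * (g k :: complex)) = g i"
proof -
  assume "i < n"
  have "(\<Sum>k<n. (if k = i then 1 else 0) * g k) = (\<Sum>k<n. if k = i then g k else 0)"
    by (rule sum.cong) auto
  then show ?thesis using \<open>i < n\<close> by (simp add: sum.delta)
qed

lemma sum_delta_r: "i < (n::nat) \<Longrightarrow> (\<Sum>k<n. (g k :: complex) * (if k = i then 1 else 0)) = g i"
  using sum_delta_l[of i n g] by (simp add: mult.commute)

lemma mid_term:
  assumes X: "X \<in> carrier_mat n n" and i: "i < n"
  shows "bra (unit_vec n i) * X * ket (unit_vec n i) = mat 1 1 (\<lambda>_. X $$ (i,i))"
proof -
  have 1: "bra (unit_vec n i) * X = mat 1 n (\<lambda>(r,s). X $$ (i,s))"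
  proof (rule eq_matI)
    fix r s assume "r < dim_row (mat 1 n (\<lambda>(r,s). X $$ (i,s)))" "s < dim_col (mat 1 n (\<lambda>(r,s). X $$ (i,s)))"
    then have s: "s < n" by simp
    have "(bra (unit_vec n i) * X) $$ (r,s) = (\<Sum>k<n. (if k = i then 1 else 0) * X $$ (k,s))"
      using X s \<open>r < _\<close> by (simp add: bra_unit scalar_prod_def atLeast0LessThan)
    also have "\<dots> = X $$ (i,s)" using i by (rule sum_delta_l)
    finally show "(bra (unit_vec n i) * X) $$ (r,s) = mat 1 n (\<lambda>(r,s). X $$ (i,s)) $$ (r,s)"
      using s \<open>r < _\<close> by simp
  qed (use X in \<open>auto simp: bra_unit\<close>)
  show ?thesis unfolding 1
  proof (rule eq_matI)
    fix r s assume "r < dim_row (mat 1 1 (\<lambda>_. X $$ (i,i)))" "s < dim_col (mat 1 1 (\<lambda>_. X $$ (i,i)))"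
    then have rs: "r = 0" "s = 0" by auto
    have "(mat 1 n (\<lambda>(r,s). X $$ (i,s)) * ket (unit_vec n i)) $$ (r,s) = (\<Sum>k<n. X $$ (i,k) * (if k = i then 1 else 0))"
      using rs by (simp add: ket_unit scalar_prod_def atLeast0LessThan)
    also have "\<dots> = X $$ (i,i)" using i by (rule sum_delta_r)
    finally show "(mat 1 n (\<lambda>(r,s). X $$ (i,s)) * ket (unit_vec n i)) $$ (r,s) = mat 1 1 (\<lambda>_. X $$ (i,i)) $$ (r,s)"
      using rs by simp
  qed (auto simp: ket_unit)
qed

lemma phi_term:
  assumes X: "X \<in> carrier_mat n n" and i: "i < n" and f: "v \<in> carrier_vec d"
  shows "ket v * bra (unit_vec n i) * X * ket (unit_vec n i) * bra v
     = mat d d (\<lambda>(r,s). X $$ (i,i) * v $ r * cnj (v $ s))"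
proof -
  have c1: "ket v \<in> carrier_mat d 1" "bra v \<in> carrier_mat 1 d" using f by (auto simp: ket_def bra_def cadj_def)
  have c2: "bra (unit_vec n i) \<in> carrier_mat 1 n" "ket (unit_vec n i) \<in> carrier_mat n 1"
    by (auto simp: ket_def bra_def cadj_def)
  have "ket v * bra (unit_vec n i) * X * ket (unit_vec n i) = ket v * (bra (unit_vec n i) * X * ket (unit_vec n i))"
  proof -
    have m: "bra (unit_vec n i) * X \<in> carrier_mat 1 n" using c2 X by simp
    show ?thesis
      using assoc_mult_mat[OF c1(1) c2(1) X] assoc_mult_mat[OF c1(1) m c2(2)] by simp
  qed
  also have "\<dots> = ket v * mat 1 1 (\<lambda>_. X $$ (i,i))" using mid_term[OF X i] by simp
  finally have e: "ket v * bra (unit_vec n i) * X * ket (unit_vec n i) * bra v = ket v * mat 1 1 (\<lambda>_. X $$ (i,i)) * bra v" by simp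
  have dv: "dim_vec v = d" using f by simp
  have e2: "ket v * mat 1 1 (\<lambda>_. X $$ (i,i)) = mat d 1 (\<lambda>(r,s). v $ r * X $$ (i,i))"
    by (rule eq_matI) (simp_all add: ket_def scalar_prod_def dv)
  show ?thesis unfolding e e2
    by (rule eq_matI) (simp_all add: ket_def bra_def cadj_def scalar_prod_def dv)
qed


lemma sum_split:
  fixes g :: "nat \<Rightarrow> 'a::comm_monoid_add"
  shows "(\<Sum>t<k*n. g t) = (\<Sum>a<k. \<Sum>j<n. g (a*n+j))"
proof -
  have "(\<Sum>t<k*n. g t) = (\<Sum>a<k. sum g {a*n..<a*n+n})"
    using sum.nat_group[of g n k] by simp
  also have "\<dots> = (\<Sum>a<k. \<Sum>j<n. g (a*n+j))"
  proof (rule sum.cong[OF refl])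
    fix a
    have "sum g {a*n..<a*n+n} = sum g {0+a*n..<n+a*n}" by (simp add: add.commute)
    also have "\<dots> = (\<Sum>j\<in>{0..<n}. g (j + a*n))" by (rule sum.shift_bounds_nat_ivl)
    finally show "sum g {a*n..<a*n+n} = (\<Sum>j<n. g (a*n+j))" by (simp add: atLeast0LessThan add.commute)
  qed
  finally show ?thesis .
qed

definition phimat :: "nat \<Rightarrow> nat \<Rightarrow> (nat \<Rightarrow> complex vec) \<Rightarrow> (nat \<Rightarrow> complex) \<Rightarrow> complex mat" where
  "phimat n d f \<alpha> = mat d d (\<lambda>(r,s). \<Sum>i<n. \<alpha> i * f i $ r * cnj (f i $ s))"

lemma phi_eq:
  assumes X: "X \<in> carrier_mat n n" and f: "\<And>i. i < n \<Longrightarrow> f i \<in> carrier_vec d"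
  shows "msum d (\<lambda>i. ket (f i) * bra (unit_vec n i) * X * ket (unit_vec n i) * bra (f i)) n
     = phimat n d f (\<lambda>i. X $$ (i,i))"
proof -
  have "msum d (\<lambda>i. ket (f i) * bra (unit_vec n i) * X * ket (unit_vec n i) * bra (f i)) n
      = msum d (\<lambda>i. mat d d (\<lambda>(r,s). X $$ (i,i) * f i $ r * cnj (f i $ s))) n"
    unfolding msum_def
    by (rule arg_cong[where f="\<lambda>xs. foldr (+) xs _"], rule map_cong[OF refl]) (simp add: phi_term[OF X _ f])
  also have "\<dots> = phimat n d f (\<lambda>i. X $$ (i,i))"
    by (subst msum_eq) (auto simp: phimat_def intro!: eq_matI)
  finally show ?thesis .
qed

lemma phimat_carrier: "phimat n d f \<alpha> \<in> carrier_mat d d"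
  by (simp add: phimat_def)

lemma phimat_dims: "dim_row (phimat n d f \<alpha>) = d" "dim_col (phimat n d f \<alpha>) = d"
  by (simp_all add: phimat_def)

lemma phimat_cadj: "cadj (phimat n d f \<alpha>) = phimat n d f (\<lambda>i. cnj (\<alpha> i))"
  by (rule eq_matI) (auto simp: phimat_def cadj_def mult.commute mult.left_commute)

lemma phimat_prod:
  assumes f: "\<And>i. i < n \<Longrightarrow> f i \<in> carrier_vec d"
    and h: "\<And>i j. i < n \<Longrightarrow> j < n \<Longrightarrow> \<alpha> i * \<beta> j * cinner (f i) (f j) = 0"
  shows "phimat n d f \<alpha> * phimat n d f \<beta> = 0\<^sub>m d d"
proof (rule eq_matI)
  fix r s assume "r < dim_row (0\<^sub>m d d :: complex mat)" "s < dim_col (0\<^sub>m d d :: complex mat)"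
  then have r: "r < d" and s: "s < d" by auto
  have "(phimat n d f \<alpha> * phimat n d f \<beta>) $$ (r,s)
     = (\<Sum>m<d. (\<Sum>i<n. \<alpha> i * f i $ r * cnj (f i $ m)) * (\<Sum>j<n. \<beta> j * f j $ m * cnj (f j $ s)))"
    using r s by (simp add: phimat_def scalar_prod_def atLeast0LessThan)
  also have "\<dots> = (\<Sum>m<d. \<Sum>i<n. \<Sum>j<n. (\<alpha> i * f i $ r * cnj (f i $ m)) * (\<beta> j * f j $ m * cnj (f j $ s)))"
    by (simp add: sum_product)
  also have "\<dots> = (\<Sum>i<n. \<Sum>m<d. \<Sum>j<n. (\<alpha> i * f i $ r * cnj (f i $ m)) * (\<beta> j * f j $ m * cnj (f j $ s)))"
    by (rule sum.swap)
  also have "\<dots> = (\<Sum>i<n. \<Sum>j<n. \<Sum>m<d. (\<alpha> i * f i $ r * cnj (f i $ m)) * (\<beta> j * f j $ m * cnj (f j $ s)))"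
    by (rule sum.cong[OF refl], rule sum.swap)
  also have "\<dots> = (\<Sum>i<n. \<Sum>j<n. (\<alpha> i * \<beta> j * cinner (f i) (f j)) * (f i $ r * cnj (f j $ s)))"
  proof (intro sum.cong[OF refl])
    fix i j assume i: "i \<in> {..<n}" and j: "j \<in> {..<n}"
    have dj: "dim_vec (f j) = d" using f j by auto
    show "(\<Sum>m<d. (\<alpha> i * f i $ r * cnj (f i $ m)) * (\<beta> j * f j $ m * cnj (f j $ s)))
        = (\<alpha> i * \<beta> j * cinner (f i) (f j)) * (f i $ r * cnj (f j $ s))"
      unfolding cinner_def dj sum_distrib_left sum_distrib_right
      by (rule sum.cong[OF refl]) (simp add: algebra_simps)
  qed
  also have "\<dots> = 0" by (intro sum.neutral ballI) (simp add: h)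
  finally show "(phimat n d f \<alpha> * phimat n d f \<beta>) $$ (r,s) = 0\<^sub>m d d $$ (r,s)" using r s by simp
qed (auto simp: phimat_def)

lemma AeB:
  assumes A: "A \<in> carrier_mat n n" and B: "B \<in> carrier_mat n n" and i: "i < n" and j: "j < n"
  shows "(A * eunit n i j * B) $$ (i,j) = A $$ (i,i) * B $$ (j,j)"
proof -
  have 1: "A * eunit n i j = mat n n (\<lambda>(p,l). if l = j then A $$ (p,i) else 0)"
  proof (rule eq_matI)
    fix p l assume "p < dim_row (mat n n (\<lambda>(p,l). if l = j then A $$ (p,i) else 0))"
      "l < dim_col (mat n n (\<lambda>(p,l). if l = j then A $$ (p,i) else 0))"
    then have p: "p < n" and l: "l < n" by auto
    have "(A * eunit n i j) $$ (p,l) = (\<Sum>k<n. A $$ (p,k) * (if k = i then (if l = j then 1 else 0) else 0))"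
      using A p l by (auto simp: eunit_eq scalar_prod_def atLeast0LessThan intro!: sum.cong)
    also have "\<dots> = (\<Sum>k<n. (if k = i then A $$ (p,k) * (if l = j then 1 else 0) else 0))"
      by (rule sum.cong) auto
    also have "\<dots> = (if l = j then A $$ (p,i) else 0)" using i by simp
    finally show "(A * eunit n i j) $$ (p,l) = mat n n (\<lambda>(p,l). if l = j then A $$ (p,i) else 0) $$ (p,l)"
      using p l by simp
  qed (use A in \<open>auto simp: eunit_eq\<close>)
  have "(A * eunit n i j * B) $$ (i,j) = (\<Sum>l<n. (if l = j then A $$ (i,i) else 0) * B $$ (l,j))"
    unfolding 1 using B i j by (simp add: scalar_prod_def atLeast0LessThan)
  also have "\<dots> = (\<Sum>l<n. if l = j then A $$ (i,i) * B $$ (l,j) else 0)"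
    by (rule sum.cong) auto
  also have "\<dots> = A $$ (i,i) * B $$ (j,j)" using j by simp
  finally show ?thesis .
qed


lemma sum_delta_gen: "s < (n::nat) \<Longrightarrow> (\<Sum>b<n. (h b :: complex) * (if r = a \<and> s = b then 1 else 0)) = (if r = a then h s else 0)"
proof -
  assume s: "s < n"
  have "(\<Sum>b<n. h b * (if r = a \<and> s = b then 1 else 0)) = (\<Sum>b<n. if s = b then (if r = a then h b else 0) else 0)"
    by (rule sum.cong) auto
  also have "\<dots> = (if r = a then h s else 0)" using s by simp
  finally show ?thesis .
qed

lemma eunit_in:
  assumes i: "i < n" and j: "j < n" and ij: "i = j \<or> E i j"
  shows "eunit n i j \<in> graph_qgraph n E"
proof -
  define c :: "nat \<Rightarrow> nat \<Rightarrow> complex" where "c = (\<lambda>a b. if a = i \<and> b = j then 1 else 0)"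
  define co where "co = (\<lambda>a b. if a = b \<or> E a b then c a b else 0)"
  have inner: "\<And>a. msum n (\<lambda>b. co a b \<cdot>\<^sub>m eunit n a b) n = mat n n (\<lambda>(r,s). \<Sum>b<n. co a b * (if r = a \<and> s = b then 1 else 0))"
    by (subst msum_eq) (auto simp: eunit_eq intro!: eq_matI sum.cong)
  have "msum n (\<lambda>a. msum n (\<lambda>b. co a b \<cdot>\<^sub>m eunit n a b) n) n
      = mat n n (\<lambda>(r,s). \<Sum>a<n. \<Sum>b<n. co a b * (if r = a \<and> s = b then 1 else 0))"
    unfolding inner by (subst msum_eq) (auto intro!: eq_matI)
  also have "\<dots> = eunit n i j"
  proof (rule eq_matI)
    fix r s assume "r < dim_row (eunit n i j)" "s < dim_col (eunit n i j)"
    then have r: "r < n" and s: "s < n" using eunit_carrier[of n i j] by auto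
    have "(\<Sum>a<n. \<Sum>b<n. co a b * (if r = a \<and> s = b then 1 else 0)) = (\<Sum>a<n. if r = a then co a s else 0)"
      using s by (simp add: sum_delta_gen)
    also have "\<dots> = co r s" using r by simp
    also have "\<dots> = eunit n i j $$ (r,s)" using r s ij by (auto simp: co_def c_def eunit_index)
    finally show "mat n n (\<lambda>(r,s). \<Sum>a<n. \<Sum>b<n. co a b * (if r = a \<and> s = b then 1 else 0)) $$ (r,s) = eunit n i j $$ (r,s)"
      using r s by simp
  qed (auto simp: eunit_eq)
  finally have "msum n (\<lambda>a. msum n (\<lambda>b. (if a = b \<or> E a b then c a b else 0) \<cdot>\<^sub>m eunit n a b) n) n = eunit n i j" unfolding co_def .
  then show ?thesis unfolding graph_qgraph_def by (intro CollectI exI[of _ c]) simp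
qed


lemma cadj_carrier: "A \<in> carrier_mat n n \<Longrightarrow> cadj A \<in> carrier_mat n n"
  unfolding cadj_def by (metis carrier_matD(1) carrier_matD(2) mat_carrier)

lemma cadj_diag: "A \<in> carrier_mat n n \<Longrightarrow> i < n \<Longrightarrow> cadj A $$ (i,i) = cnj (A $$ (i,i))"
proof -
  assume A: "A \<in> carrier_mat n n" and i: "i < n"
  have "dim_row A = n" "dim_col A = n" using A by auto
  then show ?thesis unfolding cadj_def using i by simp
qed

lemma orth_part:
  assumes f: "\<And>i. i < n \<Longrightarrow> f i \<in> carrier_vec d"
    and ortho: "\<And>i j. i < n \<Longrightarrow> j < n \<Longrightarrow> i \<noteq> j \<Longrightarrow> \<not> E i j \<Longrightarrow> cinner (f i) (f j) = 0"
    and A: "A \<in> carrier_mat n n" and B: "B \<in> carrier_mat n n"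
    and hyp: "\<forall>T \<in> graph_qgraph n E. A * T * B = 0\<^sub>m n n \<and> B * T * A = 0\<^sub>m n n \<and>
                   cadj A * T * B = 0\<^sub>m n n \<and> A * T * cadj B = 0\<^sub>m n n"
  shows "orth (phimat n d f (\<lambda>i. A $$ (i,i))) (phimat n d f (\<lambda>i. B $$ (i,i)))"
proof -
  have key: "(A $$ (i,i) * B $$ (j,j) = 0 \<and> B $$ (i,i) * A $$ (j,j) = 0 \<and>
        cnj (A $$ (i,i)) * B $$ (j,j) = 0 \<and> A $$ (i,i) * cnj (B $$ (j,j)) = 0) \<or> cinner (f i) (f j) = 0"
    if i: "i < n" and j: "j < n" for i j
  proof (cases "i = j \<or> E i j")
    case True
    then have T: "eunit n i j \<in> graph_qgraph n E" using eunit_in i j by blast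
    have h: "A * eunit n i j * B = 0\<^sub>m n n \<and> B * eunit n i j * A = 0\<^sub>m n n \<and>
          cadj A * eunit n i j * B = 0\<^sub>m n n \<and> A * eunit n i j * cadj B = 0\<^sub>m n n"
      using hyp T by blast
    have "(A * eunit n i j * B) $$ (i,j) = 0" using h i j by simp
    then have "A $$ (i,i) * B $$ (j,j) = 0" using AeB[OF A B i j] by simp
    moreover have "(B * eunit n i j * A) $$ (i,j) = 0" using h i j by simp
    then have "B $$ (i,i) * A $$ (j,j) = 0" using AeB[OF B A i j] by simp
    moreover have "(cadj A * eunit n i j * B) $$ (i,j) = 0" using h i j by simp
    then have "cnj (A $$ (i,i)) * B $$ (j,j) = 0"
      using AeB[OF cadj_carrier[OF A] B i j] cadj_diag[OF A i] by simp
    moreover have "(A * eunit n i j * cadj B) $$ (i,j) = 0" using h i j by simp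
    then have "A $$ (i,i) * cnj (B $$ (j,j)) = 0"
      using AeB[OF A cadj_carrier[OF B] i j] cadj_diag[OF B j] by simp
    ultimately show ?thesis by blast
  next
    case False
    then show ?thesis using ortho i j by blast
  qed
  have k1: "A $$ (i,i) * B $$ (j,j) * cinner (f i) (f j) = 0" if "i < n" "j < n" for i j
    using key[OF that] by (elim disjE conjE) simp_all
  have k2: "B $$ (i,i) * A $$ (j,j) * cinner (f i) (f j) = 0" if "i < n" "j < n" for i j
    using key[OF that] by (elim disjE conjE) simp_all
  have k3: "cnj (A $$ (i,i)) * B $$ (j,j) * cinner (f i) (f j) = 0" if "i < n" "j < n" for i j
    using key[OF that] by (elim disjE conjE) simp_all
  have k4: "A $$ (i,i) * cnj (B $$ (j,j)) * cinner (f i) (f j) = 0" if "i < n" "j < n" for i j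
    using key[OF that] by (elim disjE conjE) simp_all
  have p1: "phimat n d f (\<lambda>i. A $$ (i,i)) * phimat n d f (\<lambda>i. B $$ (i,i)) = 0\<^sub>m d d"
    by (rule phimat_prod[OF f k1])
  have p2: "phimat n d f (\<lambda>i. B $$ (i,i)) * phimat n d f (\<lambda>i. A $$ (i,i)) = 0\<^sub>m d d"
    by (rule phimat_prod[OF f k2])
  have p3: "cadj (phimat n d f (\<lambda>i. A $$ (i,i))) * phimat n d f (\<lambda>i. B $$ (i,i)) = 0\<^sub>m d d"
    unfolding phimat_cadj by (rule phimat_prod[OF f k3])
  have p4: "phimat n d f (\<lambda>i. A $$ (i,i)) * cadj (phimat n d f (\<lambda>i. B $$ (i,i))) = 0\<^sub>m d d"
    unfolding phimat_cadj by (rule phimat_prod[OF f k4])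
  show ?thesis unfolding orth_def phimat_dims using p1 p2 p3 p4 by blast
qed


lemma phimat_add: "phimat n d f \<alpha> + phimat n d f \<beta> = phimat n d f (\<lambda>i. \<alpha> i + \<beta> i)"
  by (rule eq_matI) (auto simp: phimat_def sum.distrib[symmetric] algebra_simps)

lemma phimat_smult: "c \<cdot>\<^sub>m phimat n d f \<alpha> = phimat n d f (\<lambda>i. c * \<alpha> i)"
  by (rule eq_matI) (auto simp: phimat_def sum_distrib_left algebra_simps)

lemma div_mod_simps:
  assumes "p < (d::nat)"
  shows "(a*d+p) div d = a" "(a*d+p) mod d = p"
  using assms by auto

definition Gt :: "nat \<Rightarrow> nat \<Rightarrow> complex mat \<Rightarrow> (nat \<Rightarrow> complex vec) \<Rightarrow> complex vec \<Rightarrow> nat \<Rightarrow> nat \<Rightarrow> nat \<Rightarrow> nat \<Rightarrow> nat \<Rightarrow> complex" where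
  "Gt n d X f v i a p b q = cnj (v $ (a*d+p)) * X $$ (a*n+i, b*n+i) * (f i $ p) * cnj (f i $ q) * v $ (b*d+q)"

lemma L1:
  assumes v: "v \<in> carrier_vec (k*d)"
  shows "cinner v (mat (k*d) (k*d) (\<lambda>(r,s). \<Sum>i<n. X $$ ((r div d)*n+i, (s div d)*n+i) * f i $ (r mod d) * cnj (f i $ (s mod d))) *\<^sub>v v)
    = (\<Sum>a<k. \<Sum>p<d. \<Sum>b<k. \<Sum>q<d. \<Sum>i<n. Gt n d X f v i a p b q)"
proof -
  let ?Y = "mat (k*d) (k*d) (\<lambda>(r,s). \<Sum>i<n. X $$ ((r div d)*n+i, (s div d)*n+i) * f i $ (r mod d) * cnj (f i $ (s mod d)))"
  have dv: "dim_vec v = k*d" using v by simp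
  have "cinner v (?Y *\<^sub>v v) = (\<Sum>r<k*d. cnj (v $ r) * (\<Sum>s<k*d. (\<Sum>i<n. X $$ ((r div d)*n+i, (s div d)*n+i) * f i $ (r mod d) * cnj (f i $ (s mod d))) * v $ s))"
    unfolding cinner_def by (intro sum.cong) (auto simp: dv scalar_prod_def atLeast0LessThan)
  also have "\<dots> = (\<Sum>a<k. \<Sum>p<d. cnj (v $ (a*d+p)) * (\<Sum>b<k. \<Sum>q<d. (\<Sum>i<n. X $$ (a*n+i, b*n+i) * f i $ p * cnj (f i $ q)) * v $ (b*d+q)))"
    unfolding sum_split by (intro sum.cong refl) (simp add: div_mod_simps)
  also have "\<dots> = (\<Sum>a<k. \<Sum>p<d. \<Sum>b<k. \<Sum>q<d. \<Sum>i<n. Gt n d X f v i a p b q)"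
    by (simp add: Gt_def sum_distrib_left sum_distrib_right mult_ac)
  finally show ?thesis .
qed


lemma idx_lt: "b < k \<Longrightarrow> j < (n::nat) \<Longrightarrow> b*n+j < k*n"
proof -
  assume "b < k" "j < n"
  then have "Suc b * n \<le> k*n" by (intro mult_le_mono1) simp
  then show ?thesis using \<open>j < n\<close> by simp
qed

lemma sum_if_r: "i < (n::nat) \<Longrightarrow> (\<Sum>j<n. (g j::complex) * (if j = i then c else 0)) = g i * c"
proof -
  assume i: "i < n"
  have "(\<Sum>j<n. g j * (if j = i then c else 0)) = (\<Sum>j<n. if j = i then g j * c else 0)"
    by (rule sum.cong) auto
  then show ?thesis using i by (simp add: sum.delta)
qed

lemma sum_if_l: "i < (n::nat) \<Longrightarrow> (\<Sum>j<n. cnj (if j = i then c else 0) * (g j::complex)) = cnj c * g i"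
proof -
  assume i: "i < n"
  have "(\<Sum>j<n. cnj (if j = i then c else 0) * g j) = (\<Sum>j<n. if j = i then cnj c * g j else 0)"
    by (rule sum.cong) auto
  then show ?thesis using i by (simp add: sum.delta)
qed

lemma swap3: "(\<Sum>b\<in>B. \<Sum>q\<in>Q. \<Sum>p\<in>P. h b q p) = (\<Sum>p\<in>P. \<Sum>b\<in>B. \<Sum>q\<in>Q. (h b q p :: complex))"
proof -
  have "(\<Sum>b\<in>B. \<Sum>q\<in>Q. \<Sum>p\<in>P. h b q p) = (\<Sum>b\<in>B. \<Sum>p\<in>P. \<Sum>q\<in>Q. h b q p)"
    by (rule sum.cong[OF refl], rule sum.swap)
  also have "\<dots> = (\<Sum>p\<in>P. \<Sum>b\<in>B. \<Sum>q\<in>Q. h b q p)" by (rule sum.swap)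
  finally show ?thesis .
qed

definition wv :: "nat \<Rightarrow> nat \<Rightarrow> nat \<Rightarrow> (nat \<Rightarrow> complex vec) \<Rightarrow> complex vec \<Rightarrow> nat \<Rightarrow> complex vec" where
  "wv k n d f v i = vec (k*n) (\<lambda>t. if t mod n = i then (\<Sum>p<d. v $ ((t div n)*d+p) * cnj (f i $ p)) else 0)"

lemma L3:
  assumes X: "X \<in> carrier_mat (k*n) (k*n)" and i: "i < n"
  shows "cinner (wv k n d f v i) (X *\<^sub>v wv k n d f v i) = (\<Sum>a<k. \<Sum>p<d. \<Sum>b<k. \<Sum>q<d. Gt n d X f v i a p b q)"
proof -
  define u where "u = (\<lambda>a. \<Sum>p<d. v $ (a*d+p) * cnj (f i $ p))"
  let ?w = "wv k n d f v i"
  have dw: "dim_vec ?w = k*n" by (simp add: wv_def)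
  have wi: "?w $ (b*n+j) = (if j = i then u b else 0)" if "b < k" "j < n" for b j
  proof -
    have "b*n+j < k*n" using that by (rule idx_lt)
    then show ?thesis using that by (simp add: wv_def u_def div_mod_simps)
  qed
  have inner: "(X *\<^sub>v ?w) $ t = (\<Sum>b<k. X $$ (t, b*n+i) * u b)" if t: "t < k*n" for t
  proof -
    have "(X *\<^sub>v ?w) $ t = (\<Sum>t'<k*n. X $$ (t,t') * ?w $ t')"
      using X t by (simp add: scalar_prod_def dw atLeast0LessThan)
    also have "\<dots> = (\<Sum>b<k. \<Sum>j<n. X $$ (t,b*n+j) * (if j = i then u b else 0))"
      unfolding sum_split by (intro sum.cong refl) (simp add: wi)
    also have "\<dots> = (\<Sum>b<k. X $$ (t, b*n+i) * u b)"
      using i by (intro sum.cong refl) (rule sum_if_r)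
    finally show ?thesis .
  qed
  have "cinner ?w (X *\<^sub>v ?w) = (\<Sum>t<k*n. cnj (?w $ t) * (X *\<^sub>v ?w) $ t)"
    using X by (simp add: cinner_def)
  also have "\<dots> = (\<Sum>a<k. \<Sum>j<n. cnj (if j = i then u a else 0) * (\<Sum>b<k. X $$ (a*n+j, b*n+i) * u b))"
    unfolding sum_split
  proof (intro sum.cong refl)
    fix a j assume a: "a \<in> {..<k}" and j: "j \<in> {..<n}"
    have "a*n+j < k*n" using a j by (intro idx_lt) auto
    then show "cnj (?w $ (a*n+j)) * (X *\<^sub>v ?w) $ (a*n+j) = cnj (if j = i then u a else 0) * (\<Sum>b<k. X $$ (a*n+j, b*n+i) * u b)"
      using a j by (simp add: wi inner)
  qed
  also have "\<dots> = (\<Sum>a<k. cnj (u a) * (\<Sum>b<k. X $$ (a*n+i, b*n+i) * u b))"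
    using i by (intro sum.cong refl) (rule sum_if_l)
  also have "\<dots> = (\<Sum>a<k. \<Sum>b<k. \<Sum>q<d. \<Sum>p<d. Gt n d X f v i a p b q)"
    by (simp add: u_def Gt_def sum_distrib_left sum_distrib_right mult_ac)
  also have "\<dots> = (\<Sum>a<k. \<Sum>p<d. \<Sum>b<k. \<Sum>q<d. Gt n d X f v i a p b q)"
    by (rule sum.cong[OF refl], rule swap3)
  finally show ?thesis .
qed


lemma pull4: "(\<Sum>a\<in>A. \<Sum>p\<in>P. \<Sum>b\<in>B. \<Sum>q\<in>Q. \<Sum>i\<in>I. h a p b q i)
   = (\<Sum>i\<in>I. \<Sum>a\<in>A. \<Sum>p\<in>P. \<Sum>b\<in>B. \<Sum>q\<in>Q. (h a p b q i :: complex))"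
proof -
  have "(\<Sum>a\<in>A. \<Sum>p\<in>P. \<Sum>b\<in>B. \<Sum>q\<in>Q. \<Sum>i\<in>I. h a p b q i)
      = (\<Sum>a\<in>A. \<Sum>p\<in>P. \<Sum>b\<in>B. \<Sum>i\<in>I. \<Sum>q\<in>Q. h a p b q i)"
    by (intro sum.cong refl sum.swap)
  also have "\<dots> = (\<Sum>a\<in>A. \<Sum>p\<in>P. \<Sum>i\<in>I. \<Sum>b\<in>B. \<Sum>q\<in>Q. h a p b q i)"
    by (intro sum.cong refl sum.swap)
  also have "\<dots> = (\<Sum>a\<in>A. \<Sum>i\<in>I. \<Sum>p\<in>P. \<Sum>b\<in>B. \<Sum>q\<in>Q. h a p b q i)"
    by (intro sum.cong refl sum.swap)
  also have "\<dots> = (\<Sum>i\<in>I. \<Sum>a\<in>A. \<Sum>p\<in>P. \<Sum>b\<in>B. \<Sum>q\<in>Q. h a p b q i)"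
    by (rule sum.swap)
  finally show ?thesis .
qed

lemma psd_Y:
  assumes X: "psd (k*n) X"
  shows "psd (k*d) (mat (k*d) (k*d) (\<lambda>(r,s). \<Sum>i<n. X $$ ((r div d)*n+i, (s div d)*n+i) * f i $ (r mod d) * cnj (f i $ (s mod d))))"
  unfolding psd_def
proof (intro conjI ballI)
  fix v :: "complex vec" assume v: "v \<in> carrier_vec (k*d)"
  have Xc: "X \<in> carrier_mat (k*n) (k*n)" using X by (simp add: psd_def)
  have pos: "\<exists>r::real. r \<ge> 0 \<and> cinner (wv k n d f v i) (X *\<^sub>v wv k n d f v i) = complex_of_real r" for i
    using X by (simp add: psd_def wv_def)
  define R where "R = (\<lambda>i. cinner (wv k n d f v i) (X *\<^sub>v wv k n d f v i))"
  have R: "R i = complex_of_real (Re (R i)) \<and> Re (R i) \<ge> 0" for i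
    using pos[of i] unfolding R_def by auto
  have "cinner v (mat (k*d) (k*d) (\<lambda>(r,s). \<Sum>i<n. X $$ ((r div d)*n+i, (s div d)*n+i) * f i $ (r mod d) * cnj (f i $ (s mod d))) *\<^sub>v v)
     = (\<Sum>i<n. \<Sum>a<k. \<Sum>p<d. \<Sum>b<k. \<Sum>q<d. Gt n d X f v i a p b q)"
    unfolding L1[OF v] by (rule pull4)
  also have "\<dots> = (\<Sum>i<n. R i)"
    unfolding R_def by (intro sum.cong refl) (simp add: L3[OF Xc])
  also have "\<dots> = complex_of_real (\<Sum>i<n. Re (R i))"
    by (subst R) simp
  finally show "\<exists>r::real. r \<ge> 0 \<and> cinner v (mat (k*d) (k*d) (\<lambda>(r,s). \<Sum>i<n. X $$ ((r div d)*n+i, (s div d)*n+i) * f i $ (r mod d) * cnj (f i $ (s mod d))) *\<^sub>v v) = complex_of_real r"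
    using R by (intro exI[of _ "\<Sum>i<n. Re (R i)"]) (auto intro: sum_nonneg)
qed simp


lemma phimat_cong: "(\<And>i. i < n \<Longrightarrow> \<alpha> i = \<beta> i) \<Longrightarrow> phimat n d f \<alpha> = phimat n d f \<beta>"
  unfolding phimat_def by (intro cong_mat refl) (auto intro!: sum.cong)

theorem proposition5p4:
  fixes n d :: nat and E :: "nat \<Rightarrow> nat \<Rightarrow> bool" and f :: "nat \<Rightarrow> complex vec"
  assumes "simple_graph n E"
    and "classical_orth_rep n E d f"
  shows "qgraph_orth_rep n (graph_qgraph n E) d
           (\<lambda>X. msum d (\<lambda>i. ket (f i) * bra (unit_vec n i) * X * ket (unit_vec n i) * bra (f i)) n)"
proof -
  define \<Phi> where "\<Phi> = (\<lambda>X. msum d (\<lambda>i. ket (f i) * bra (unit_vec n i) * X * ket (unit_vec n i) * bra (f i)) n)"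
  have f: "\<And>i. i < n \<Longrightarrow> f i \<in> carrier_vec d" using assms(2) by (simp add: classical_orth_rep_def)
  have ortho: "\<And>i j. i < n \<Longrightarrow> j < n \<Longrightarrow> i \<noteq> j \<Longrightarrow> \<not> E i j \<Longrightarrow> cinner (f i) (f j) = 0"
    using assms(2) by (simp add: classical_orth_rep_def)
  have PE: "\<Phi> X = phimat n d f (\<lambda>i. X $$ (i,i))" if "X \<in> carrier_mat n n" for X
    unfolding \<Phi>_def by (rule phi_eq[OF that f])
  have c1: "\<forall>A \<in> carrier_mat n n. \<Phi> A \<in> carrier_mat d d"
    using PE phimat_carrier by simp
  have c2: "\<forall>A \<in> carrier_mat n n. \<forall>B \<in> carrier_mat n n. \<Phi> (A + B) = \<Phi> A + \<Phi> B"
  proof (intro ballI)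
    fix A B :: "complex mat" assume A: "A \<in> carrier_mat n n" and B: "B \<in> carrier_mat n n"
    have "A + B \<in> carrier_mat n n" using A B by simp
    then show "\<Phi> (A + B) = \<Phi> A + \<Phi> B"
      unfolding PE[OF A] PE[OF B] phimat_add PE[OF \<open>A + B \<in> _\<close>]
      using A B by (intro phimat_cong) simp
  qed
  have c3: "\<forall>A \<in> carrier_mat n n. \<forall>c. \<Phi> (c \<cdot>\<^sub>m A) = c \<cdot>\<^sub>m \<Phi> A"
  proof (intro ballI allI)
    fix A :: "complex mat" and c assume A: "A \<in> carrier_mat n n"
    have "c \<cdot>\<^sub>m A \<in> carrier_mat n n" using A by simp
    then show "\<Phi> (c \<cdot>\<^sub>m A) = c \<cdot>\<^sub>m \<Phi> A"
      unfolding PE[OF A] phimat_smult PE[OF \<open>c \<cdot>\<^sub>m A \<in> _\<close>]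
      using A by (intro phimat_cong) simp
  qed
  have c4: "psd (k * d) (mat (k * d) (k * d) (\<lambda>(r, s). \<Phi> (block n X (r div d) (s div d)) $$ (r mod d, s mod d)))"
    if X: "psd (k * n) X" for k X
  proof -
    have "mat (k * d) (k * d) (\<lambda>(r, s). \<Phi> (block n X (r div d) (s div d)) $$ (r mod d, s mod d))
      = mat (k*d) (k*d) (\<lambda>(r,s). \<Sum>i<n. X $$ ((r div d)*n+i, (s div d)*n+i) * f i $ (r mod d) * cnj (f i $ (s mod d)))"
    proof (rule cong_mat[OF refl refl])
      fix r s assume r: "r < k*d" and s: "s < k*d"
      then have d: "d > 0" by (cases d) auto
      have bc: "block n X (r div d) (s div d) \<in> carrier_mat n n" by (simp add: block_def)
      have "\<Phi> (block n X (r div d) (s div d)) $$ (r mod d, s mod d) = (\<Sum>i<n. X $$ ((r div d)*n+i, (s div d)*n+i) * f i $ (r mod d) * cnj (f i $ (s mod d)))"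
        unfolding PE[OF bc] using d by (simp add: phimat_def block_def)
      then show "(case (r, s) of (r, s) \<Rightarrow> \<Phi> (block n X (r div d) (s div d)) $$ (r mod d, s mod d))
          = (case (r, s) of (r, s) \<Rightarrow> \<Sum>i<n. X $$ ((r div d)*n+i, (s div d)*n+i) * f i $ (r mod d) * cnj (f i $ (s mod d)))"
        by simp
    qed
    then show ?thesis using psd_Y[OF X] by simp
  qed
  have c5: "orth (\<Phi> A) (\<Phi> B)"
    if A: "A \<in> carrier_mat n n" and B: "B \<in> carrier_mat n n"
      and hyp: "\<forall>T \<in> graph_qgraph n E. A * T * B = 0\<^sub>m n n \<and> B * T * A = 0\<^sub>m n n \<and>
                   cadj A * T * B = 0\<^sub>m n n \<and> A * T * cadj B = 0\<^sub>m n n" for A B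
    unfolding PE[OF A] PE[OF B] by (rule orth_part[OF f ortho A B hyp])
  show ?thesis
    unfolding qgraph_orth_rep_def completely_positive_def \<Phi>_def[symmetric]
    using c1 c2 c3 c4 c5 by blast
qed

end
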